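(* Let $m,n$ be positive integers and $f\in L^1(\mathbb{T})$ with Fourier coefficients $d(k)$, $k\in\mathbb{Z}$. Then $$D^{[4m]}_n(f)=\mathrm{Pf}^{[2m]}\Big(\prod_{s=1}^m(i_{2s}-i_{2s-1})\cdot d\big((2n+1)m-i_1-i_2-\cdots-i_{2m}\big)\Big)_{1\le i_1,\dots,i_{2m}\le 2n}.$$ In particular $D^{[4]}_n(f)=\mathrm{pf}\big((j-i)\,d(2n+1-i-j)\big)_{1\le i,j\le 2n}$.
   Context: $\mathbb{T}$ is the unit circle with normalized Haar measure, $d(k)=\int_{\mathbb{T}}f(z)z^{-k}\mathrm{d}z$. Toeplitz hyperdeterminant: $D^{[2p]}_n(f)=\mathrm{Det}^{[2p]}\big(d(i_1+\cdots+i_p-i_{p+1}-\cdots-i_{2p})\big)_{1\le i_1,\dots,i_{2p}\le n}$, with $\mathrm{Det}^{[2p]}(A):=\frac{1}{n!}\sum_{\sigma_1,\dots,\sigma_{2p}\in\mathfrak{S}_n}\prod_j\mathrm{sgn}(\sigma_j)\prod_{i=1}^nA(\sigma_1(i),\dots,\sigma_{2p}(i))$. Hyperpfaffian of an array $B$ indexed by $\{1,\dots,2n\}^{2m}$ that changes sign when $i_{2s-1},i_{2s}$ are interchanged (each $s$): with $\mathfrak{E}_{2n}=\{\sigma\in\mathfrak{S}_{2n}:\sigma(2i-1)<\sigma(2i)\}$, $\mathrm{Pf}^{[2m]}(B):=\frac{1}{n!}\sum_{\sigma_1,\dots,\sigma_m\in\mathfrak{E}_{2n}}\prod_s\mathrm{sgn}(\sigma_s)\prod_{i=1}^nB(\sigma_1(2i-1),\sigma_1(2i),\dots,\sigma_m(2i-1),\sigma_m(2i))$;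 $\mathrm{pf}$ is the ordinary Pfaffian. *)

theory Defs
  imports "HOL-Analysis.Analysis" "HOL-Combinatorics.Permutations"
begin

definition fourier_coeff :: "(complex \<Rightarrow> complex) \<Rightarrow> int \<Rightarrow> complex" where
  "fourier_coeff f k = complex_of_real (1 / (2 * pi)) *
     integral {0..2*pi} (\<lambda>t. f (cis t) * cis (- (real_of_int k) * t))"

definition L1_circle :: "(complex \<Rightarrow> complex) \<Rightarrow> bool" where
  "L1_circle f \<longleftrightarrow> (\<lambda>t. f (cis t)) absolutely_integrable_on {0..2*pi}"

text \<open>Hyperdeterminant of order q (q = 2p) of an array A indexed by tuples
  (represented as functions from positions 0..<q to {1..n}).\<close>
definition hyperdet :: "nat \<Rightarrow> nat \<Rightarrow> ((nat \<Rightarrow> nat) \<Rightarrow> complex) \<Rightarrow> complex" where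
  "hyperdet q n A = (1 / of_nat (fact n)) *
     (\<Sum>\<sigma> \<in> PiE {0..<q} (\<lambda>_. {\<pi>. \<pi> permutes {1..n}}).
        (\<Prod>j<q. of_int (sign (\<sigma> j))) *
        (\<Prod>i\<in>{1..n}. A (\<lambda>j. \<sigma> j i)))"

definition toeplitz_hyperdet :: "nat \<Rightarrow> nat \<Rightarrow> (int \<Rightarrow> complex) \<Rightarrow> complex" where
  "toeplitz_hyperdet p n d = hyperdet (2*p) n
     (\<lambda>idx. d ((\<Sum>j<p. int (idx j)) - (\<Sum>j\<in>{p..<2*p}. int (idx j))))"

definition E_perms :: "nat \<Rightarrow> (nat \<Rightarrow> nat) set" where
  "E_perms n = {\<sigma>. \<sigma> permutes {1..2*n} \<and> (\<forall>i\<in>{1..n}. \<sigma> (2*i-1) < \<sigma> (2*i))}"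

text \<open>Hyperpfaffian Pf^{[2m]} of an array B indexed by {1..2n}^{2m}; tuple position
  2s (resp. 2s+1), s<m, corresponds to i_{2s+1} (resp. i_{2s+2}).\<close>
definition hyperpf :: "nat \<Rightarrow> nat \<Rightarrow> ((nat \<Rightarrow> nat) \<Rightarrow> complex) \<Rightarrow> complex" where
  "hyperpf m n B = (1 / of_nat (fact n)) *
     (\<Sum>\<sigma> \<in> PiE {0..<m} (\<lambda>_. E_perms n).
        (\<Prod>s<m. of_int (sign (\<sigma> s))) *
        (\<Prod>i\<in>{1..n}. B (\<lambda>j. if even j then \<sigma> (j div 2) (2*i-1) else \<sigma> (j div 2) (2*i))))"

definition pfaffian :: "nat \<Rightarrow> (nat \<Rightarrow> nat \<Rightarrow> complex) \<Rightarrow> complex" where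
  "pfaffian n a = (1 / (of_nat (2^n * fact n))) *
     (\<Sum>\<sigma> | \<sigma> permutes {1..2*n}. of_int (sign \<sigma>) *
        (\<Prod>i\<in>{1..n}. a (\<sigma> (2*i-1)) (\<sigma> (2*i))))"

end

theory Submission
  imports Defs "HOL-Library.Poly_Mapping" "Jordan_Normal_Form.Determinant"
begin

lemma vdm_det:
  fixes y :: "nat \<Rightarrow> 'a::comm_ring_1"
  shows "det (mat N N (\<lambda>(i,j). y i ^ j)) = (\<Prod>j<N. \<Prod>i<j. (y j - y i))"
proof (induction N arbitrary: y)
  case 0
  then show ?case by simp
next
  case (Suc M)
  define A where "A = mat (Suc M) (Suc M) (\<lambda>(i,j). y i ^ j)"
  define T where "T = mat (Suc M) (Suc M) (\<lambda>(i,j). if i = j then 1 else if j = Suc i then - y 0 else (0::'a))"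
  define B where "B = mat (Suc M) (Suc M) (\<lambda>(i,j). if j = 0 then 1 else y i ^ (j - 1) * (y i - y 0))"
  have A: "A \<in> carrier_mat (Suc M) (Suc M)" and T: "T \<in> carrier_mat (Suc M) (Suc M)"
    by (auto simp: A_def T_def)
  have detT: "det T = 1"
  proof -
    have "upper_triangular T" by (auto simp: T_def upper_triangular_def)
    hence "det T = prod_list (diag_mat T)" using T by (rule det_upper_triangular)
    also have "\<dots> = 1" unfolding prod_list_diag_prod by (simp add: T_def)
    finally show ?thesis .
  qed
  have AT: "A * T = B"
  proof (rule eq_matI)
    fix i j assume i: "i < dim_row B" and j: "j < dim_col B"
    have "(A * T) $$ (i,j) = (\<Sum>k<Suc M. y i ^ k * (if k = j then 1 else if j = Suc k then - y 0 else 0))"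
      using i j by (simp add: A_def T_def B_def scalar_prod_def atLeast0LessThan)
    also have "\<dots> = (\<Sum>k<Suc M. (if k = j then y i ^ k else 0) + (if Suc k = j then - y 0 * y i ^ k else 0))"
      by (intro sum.cong) auto
    also have "\<dots> = B $$ (i,j)"
    proof (cases j)
      case 0
      then show ?thesis using i j by (simp add: sum.distrib B_def)
    next
      case (Suc j')
      have "(\<Sum>k<Suc M. (if Suc k = j then - y 0 * y i ^ k else 0)) = (\<Sum>k<Suc M. (if k = j' then - y 0 * y i ^ k else 0))"
        using Suc by (intro sum.cong) auto
      have M: "\<not> Suc j' < M \<Longrightarrow> M = Suc j'" using j Suc by (auto simp: B_def)
      then show ?thesis using i j Suc by (cases "Suc j' < M") (auto simp: sum.distrib B_def algebra_simps)
    qed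
    finally show "(A * T) $$ (i,j) = B $$ (i,j)" .
  qed (auto simp: A_def T_def B_def)
  have "det A = det B" using det_mult[OF A T] detT AT by simp
  also have "det B = (\<Sum>j<Suc M. B $$ (0, j) * cofactor B 0 j)"
    by (rule laplace_expansion_row) (auto simp: B_def)
  also have "\<dots> = cofactor B 0 0"
    by (subst sum.lessThan_Suc_shift) (simp add: B_def)
  also have "\<dots> = det (mat_delete B 0 0)" by (simp add: cofactor_def)
  also have "mat_delete B 0 0 = mat M M (\<lambda>(i,j). if i = j then y (Suc i) - y 0 else 0) * mat M M (\<lambda>(i,j). y (Suc i) ^ j)"
    (is "_ = ?D * ?A'")
  proof (rule eq_matI)
    fix i j assume i: "i < dim_row (?D * ?A')" and j: "j < dim_col (?D * ?A')"
    have "(?D * ?A') $$ (i,j) = (\<Sum>k<M. (if i = k then y (Suc i) - y 0 else 0) * y (Suc k) ^ j)"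
      using i j by (simp add: scalar_prod_def atLeast0LessThan)
    also have "\<dots> = (y (Suc i) - y 0) * y (Suc i) ^ j"
    proof -
      have "(\<Sum>k<M. (if i = k then y (Suc i) - y 0 else 0) * y (Suc k) ^ j) = (\<Sum>k<M. if k = i then (y (Suc i) - y 0) * y (Suc i) ^ j else 0)"
        by (intro sum.cong) auto
      thus ?thesis using i by simp
    qed
    finally show "mat_delete B 0 0 $$ (i,j) = (?D * ?A') $$ (i,j)"
      using i j by (simp add: mat_delete_def B_def)
  qed (auto simp: mat_delete_def B_def)
  also have "det (?D * ?A') = det ?D * det ?A'"
    by (rule det_mult) auto
  also have "det ?D = (\<Prod>i<M. y (Suc i) - y 0)"
  proof -
    have "upper_triangular ?D" by (auto simp: upper_triangular_def)
    hence "det ?D = prod_list (diag_mat ?D)" by (rule det_upper_triangular) auto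
    also have "\<dots> = (\<Prod>i<M. y (Suc i) - y 0)" unfolding prod_list_diag_prod by (simp add: atLeast0LessThan)
    finally show ?thesis .
  qed
  also have "det ?A' = (\<Prod>j<M. \<Prod>i<j. (y (Suc j) - y (Suc i)))"
    using Suc.IH[of "\<lambda>i. y (Suc i)"] by simp
  also have "(\<Prod>i<M. y (Suc i) - y 0) * (\<Prod>j<M. \<Prod>i<j. (y (Suc j) - y (Suc i)))
      = (\<Prod>j<Suc M. \<Prod>i<j. (y j - y i))"
  proof -
    have "(\<Prod>j<Suc M. \<Prod>i<j. (y j - y i)) = (\<Prod>j<M. \<Prod>i<Suc j. (y (Suc j) - y i))"
      by (subst prod.lessThan_Suc_shift) simp
    also have "\<dots> = (\<Prod>j<M. (y (Suc j) - y 0) * (\<Prod>i<j. (y (Suc j) - y (Suc i))))"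
      by (intro prod.cong refl) (rule prod.lessThan_Suc_shift)
    also have "\<dots> = (\<Prod>i<M. y (Suc i) - y 0) * (\<Prod>j<M. \<Prod>i<j. (y (Suc j) - y (Suc i)))"
      by (rule prod.distrib)
    finally show ?thesis by simp
  qed
  finally show ?case by (simp add: A_def)
qed

lemma vdm0:
  fixes y :: "nat \<Rightarrow> 'a::comm_ring_1"
  shows "(\<Sum>p | p permutes {0..<N}. of_int (sign p) * (\<Prod>i<N. y i ^ p i)) = (\<Prod>j<N. \<Prod>i<j. (y j - y i))"
proof -
  have "det (mat N N (\<lambda>(i,j). y i ^ j)) = (\<Sum>p | p permutes {0..<N}. of_int (sign p) * (\<Prod>i<N. y i ^ p i))"
  proof (subst det_def'[of _ N], simp, intro sum.cong refl)
    fix p assume "p \<in> {p. p permutes {0..<N}}"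
    hence "i < N \<Longrightarrow> p i < N" for i by (auto dest: permutes_in_image)
    thus "of_int (sign p) * (\<Prod>i = 0..<N. mat N N (\<lambda>(i, j). y i ^ j) $$ (i, p i)) = of_int (sign p) * (\<Prod>i<N. y i ^ p i)"
      by (auto simp: atLeast0LessThan intro!: prod.cong)
  qed
  then show ?thesis using vdm_det by metis
qed


definition Ek :: "nat \<Rightarrow> nat \<Rightarrow> (nat \<Rightarrow> nat) set" where
  "Ek n k = {\<pi>. \<pi> permutes {1..2*n} \<and> (\<forall>i\<in>{1..k}. \<pi> (2*i-1) < \<pi> (2*i))}"

definition PP :: "nat \<Rightarrow> nat \<Rightarrow> (nat \<Rightarrow> nat \<Rightarrow> nat \<Rightarrow> 'a::comm_ring_1) \<Rightarrow> (nat \<Rightarrow> nat) \<Rightarrow> 'a" where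
  "PP n k g \<pi> = (\<Prod>i\<in>{1..n}. (if i \<le> k then g i (\<pi> (2*i-1)) (\<pi> (2*i)) - g i (\<pi> (2*i)) (\<pi> (2*i-1))
       else g i (\<pi> (2*i-1)) (\<pi> (2*i))))"

lemma finite_Ek: "finite (Ek n k)"
proof -
  have "Ek n k \<subseteq> {\<pi>. \<pi> permutes {1..2*n}}" by (auto simp: Ek_def)
  moreover have "finite {\<pi>. \<pi> permutes {1..2*n}}" by (rule finite_permutations) simp
  ultimately show ?thesis by (rule finite_subset)
qed

lemma fold_step:
  fixes g :: "nat \<Rightarrow> nat \<Rightarrow> nat \<Rightarrow> 'a::comm_ring_1"
  assumes k: "Suc k \<le> n"
  shows "(\<Sum>\<pi>\<in>Ek n k. of_int (sign \<pi>) * PP n k g \<pi>) = (\<Sum>\<pi>\<in>Ek n (Suc k). of_int (sign \<pi>) * PP n (Suc k) g \<pi>)"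
proof -
  define t where "t = Transposition.transpose (2*k+1) (2*k+2)"
  have tt: "t \<circ> t = id" by (simp add: t_def fun_eq_iff)
  have t_perm: "t permutes {1..2*n}" unfolding t_def using k by (intro permutes_swap_id) auto
  have t_other: "t j = j" if "j \<noteq> 2*k+1" "j \<noteq> 2*k+2" for j using that by (simp add: t_def)
  have t_oth: "t (2*i-1) = 2*i-1 \<and> t (2*i) = 2*i" if "i \<noteq> Suc k" "i \<ge> 1" for i
    using that unfolding t_def by (auto simp: Transposition.transpose_def)
  have t1: "t (2*k+1) = 2*k+2" and t2: "t (2*k+2) = 2*k+1" by (simp_all add: t_def)
  have sub: "Ek n (Suc k) \<subseteq> Ek n k" by (auto simp: Ek_def)
  have img: "(\<lambda>\<pi>. \<pi> \<circ> t) ` Ek n (Suc k) \<subseteq> Ek n k"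
  proof
    fix \<rho> assume "\<rho> \<in> (\<lambda>\<pi>. \<pi> \<circ> t) ` Ek n (Suc k)"
    then obtain \<pi> where \<pi>: "\<pi> \<in> Ek n (Suc k)" and r: "\<rho> = \<pi> \<circ> t" by auto
    have "\<rho> permutes {1..2*n}" using \<pi> t_perm r by (auto simp: Ek_def intro: permutes_compose)
    moreover have "\<rho> (2*i-1) < \<rho> (2*i)" if "i \<in> {1..k}" for i
    proof -
      have "t (2*i-1) = 2*i-1" "t (2*i) = 2*i" using that using t_oth[of i] by auto
      thus ?thesis using \<pi> that r by (auto simp: Ek_def)
    qed
    ultimately show "\<rho> \<in> Ek n k" by (auto simp: Ek_def)
  qed
  have cover: "Ek n k \<subseteq> Ek n (Suc k) \<union> (\<lambda>\<pi>. \<pi> \<circ> t) ` Ek n (Suc k)"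
  proof
    fix \<pi> assume \<pi>: "\<pi> \<in> Ek n k"
    hence pp: "\<pi> permutes {1..2*n}" by (auto simp: Ek_def)
    show "\<pi> \<in> Ek n (Suc k) \<union> (\<lambda>\<pi>. \<pi> \<circ> t) ` Ek n (Suc k)"
    proof (cases "\<pi> (2*k+1) < \<pi> (2*k+2)")
      case True
      then have "\<pi> \<in> Ek n (Suc k)" using \<pi> by (auto simp: Ek_def le_Suc_eq)
      thus ?thesis by blast
    next
      case False
      have "\<pi> (2*k+1) \<noteq> \<pi> (2*k+2)"
      proof
        assume "\<pi> (2*k+1) = \<pi> (2*k+2)"
        from injD[OF permutes_inj[OF pp] this] show False by simp
      qed
      with False have lt: "\<pi> (2*k+2) < \<pi> (2*k+1)" by simp
      have "\<pi> \<circ> t \<in> Ek n (Suc k)"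
      proof -
        have "\<pi> \<circ> t permutes {1..2*n}" using pp t_perm by (rule permutes_compose[rotated])
        moreover have "(\<pi> \<circ> t) (2*i-1) < (\<pi> \<circ> t) (2*i)" if "i \<in> {1..Suc k}" for i
        proof (cases "i = Suc k")
          case True thus ?thesis using lt t1 t2 by simp
        next
          case False
          hence "t (2*i-1) = 2*i-1" "t (2*i) = 2*i" using that using t_oth[of i] by auto
          thus ?thesis using \<pi> that False by (auto simp: Ek_def)
        qed
        ultimately show ?thesis by (auto simp: Ek_def)
      qed
      moreover have "\<pi> = (\<pi> \<circ> t) \<circ> t" by (simp add: o_assoc[symmetric] tt)
      ultimately show ?thesis by blast
    qed
  qed
  have eq: "Ek n k = Ek n (Suc k) \<union> (\<lambda>\<pi>. \<pi> \<circ> t) ` Ek n (Suc k)" using sub img cover by blast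
  have disj: "Ek n (Suc k) \<inter> (\<lambda>\<pi>. \<pi> \<circ> t) ` Ek n (Suc k) = {}"
  proof (rule ccontr)
    assume "\<not> ?thesis"
    then obtain \<pi> \<rho> where a: "\<pi> \<in> Ek n (Suc k)" "\<rho> \<in> Ek n (Suc k)" "\<pi> = \<rho> \<circ> t" by auto
    have h: "\<forall>i\<in>{1..Suc k}. \<pi> (2*i-1) < \<pi> (2*i)" "\<forall>i\<in>{1..Suc k}. \<rho> (2*i-1) < \<rho> (2*i)"
      using a(1,2) by (auto simp: Ek_def)
    have sk: "Suc k \<in> {1..Suc k}" by simp
    have "\<pi> (2*Suc k - 1) < \<pi> (2*Suc k)" "\<rho> (2*Suc k - 1) < \<rho> (2*Suc k)" using bspec[OF h(1) sk] bspec[OF h(2) sk] by auto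
    hence "\<pi> (2*k+1) < \<pi> (2*k+2)" "\<rho> (2*k+1) < \<rho> (2*k+2)" by (simp_all add: numeral_2_eq_2)
    thus False using a(3) t1 t2 by simp
  qed
  have inj: "inj_on (\<lambda>\<pi>. \<pi> \<circ> t) (Ek n (Suc k))"
    by (rule inj_onI) (metis comp_assoc comp_id tt)
  define F where "F = (\<lambda>\<pi>. of_int (sign \<pi>) * PP n k g \<pi>)"
  have "(\<Sum>\<pi>\<in>Ek n k. F \<pi>) = (\<Sum>\<pi>\<in>Ek n (Suc k). F \<pi>) + (\<Sum>\<pi>\<in>(\<lambda>\<pi>. \<pi> \<circ> t) ` Ek n (Suc k). F \<pi>)"
    unfolding eq by (rule sum.union_disjoint) (auto simp: finite_Ek disj)
  also have "(\<Sum>\<pi>\<in>(\<lambda>\<pi>. \<pi> \<circ> t) ` Ek n (Suc k). F \<pi>) = (\<Sum>\<pi>\<in>Ek n (Suc k). F (\<pi> \<circ> t))"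
    using sum.reindex[OF inj, of F] by (simp add: o_def)
  also have "(\<Sum>\<pi>\<in>Ek n (Suc k). F \<pi>) + (\<Sum>\<pi>\<in>Ek n (Suc k). F (\<pi> \<circ> t)) =
      (\<Sum>\<pi>\<in>Ek n (Suc k). of_int (sign \<pi>) * PP n (Suc k) g \<pi>)"
    unfolding sum.distrib[symmetric]
  proof (rule sum.cong[OF refl])
    fix \<pi> assume \<pi>: "\<pi> \<in> Ek n (Suc k)"
    hence pp: "\<pi> permutes {1..2*n}" by (auto simp: Ek_def)
    have sgn: "sign (\<pi> \<circ> t) = - sign \<pi>"
    proof -
      have "permutation \<pi>" "permutation t"
        using permutes_imp_permutation[OF finite_atLeastAtMost pp] permutes_imp_permutation[OF finite_atLeastAtMost t_perm] by auto
      hence "sign (\<pi> \<circ> t) = sign \<pi> * sign t" by (rule sign_compose)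
      moreover have "sign t = -1" unfolding t_def by (simp add: sign_swap_id)
      ultimately show ?thesis by simp
    qed
    define a where "a = \<pi> (2*k+1)"
    define b where "b = \<pi> (2*k+2)"
    define Q where "Q = (\<lambda>k' \<pi>. \<Prod>i\<in>{1..n}-{Suc k}. (if i \<le> k' then g i (\<pi> (2*i-1)) (\<pi> (2*i)) - g i (\<pi> (2*i)) (\<pi> (2*i-1))
       else g i (\<pi> (2*i-1)) (\<pi> (2*i))))"
    have sk: "Suc k \<in> {1..n}" using k by auto
    have P1: "PP n k' g \<rho> = (if Suc k \<le> k' then g (Suc k) (\<rho> (2*k+1)) (\<rho> (2*k+2)) - g (Suc k) (\<rho> (2*k+2)) (\<rho> (2*k+1))
       else g (Suc k) (\<rho> (2*k+1)) (\<rho> (2*k+2))) * Q k' \<rho>" for k' \<rho>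
      unfolding PP_def Q_def by (subst prod.remove[OF _ sk]) auto
    have Qk: "Q k \<rho> = Q (Suc k) \<rho>" for \<rho>
      unfolding Q_def by (intro prod.cong) auto
    have Qt: "Q k (\<pi> \<circ> t) = Q k \<pi>"
      unfolding Q_def
    proof (intro prod.cong refl)
      fix i assume "i \<in> {1..n} - {Suc k}"
      hence "t (2*i-1) = 2*i-1" "t (2*i) = 2*i" using t_oth[of i] by auto
      thus "(if i \<le> k then g i ((\<pi> \<circ> t) (2*i-1)) ((\<pi> \<circ> t) (2*i)) - g i ((\<pi> \<circ> t) (2*i)) ((\<pi> \<circ> t) (2*i-1))
       else g i ((\<pi> \<circ> t) (2*i-1)) ((\<pi> \<circ> t) (2*i))) = (if i \<le> k then g i (\<pi> (2*i-1)) (\<pi> (2*i)) - g i (\<pi> (2*i)) (\<pi> (2*i-1))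
       else g i (\<pi> (2*i-1)) (\<pi> (2*i)))" by simp
    qed
    show "F \<pi> + F (\<pi> \<circ> t) = of_int (sign \<pi>) * PP n (Suc k) g \<pi>"
      unfolding F_def P1 sgn using Qk Qt t1 t2
      by (simp add: algebra_simps)
  qed
  finally show ?thesis unfolding F_def .
qed

lemma fold_k:
  fixes g :: "nat \<Rightarrow> nat \<Rightarrow> nat \<Rightarrow> 'a::comm_ring_1"
  assumes "k \<le> n"
  shows "(\<Sum>\<pi>\<in>Ek n 0. of_int (sign \<pi>) * PP n 0 g \<pi>) = (\<Sum>\<pi>\<in>Ek n k. of_int (sign \<pi>) * PP n k g \<pi>)"
  using assms
proof (induction k)
  case (Suc k)
  then show ?case using fold_step[of k n g] by simp
qed simp

lemma fold_perm:
  fixes g :: "nat \<Rightarrow> nat \<Rightarrow> nat \<Rightarrow> 'a::comm_ring_1"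
  shows "(\<Sum>\<pi> | \<pi> permutes {1..2*n}. of_int (sign \<pi>) * (\<Prod>i\<in>{1..n}. g i (\<pi> (2*i-1)) (\<pi> (2*i))))
    = (\<Sum>\<sigma>\<in>E_perms n. of_int (sign \<sigma>) * (\<Prod>i\<in>{1..n}. g i (\<sigma> (2*i-1)) (\<sigma> (2*i)) - g i (\<sigma> (2*i)) (\<sigma> (2*i-1))))"
proof -
  have "Ek n 0 = {\<pi>. \<pi> permutes {1..2*n}}" by (auto simp: Ek_def)
  moreover have "Ek n n = E_perms n" by (auto simp: Ek_def E_perms_def)
  moreover have "PP n 0 g = (\<lambda>\<pi>. (\<Prod>i\<in>{1..n}. g i (\<pi> (2*i-1)) (\<pi> (2*i))))"
    by (auto simp: PP_def fun_eq_iff intro!: prod.cong)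
  moreover have "PP n n g = (\<lambda>\<pi>. (\<Prod>i\<in>{1..n}. g i (\<pi> (2*i-1)) (\<pi> (2*i)) - g i (\<pi> (2*i)) (\<pi> (2*i-1))))"
    by (auto simp: PP_def fun_eq_iff intro!: prod.cong)
  ultimately show ?thesis using fold_k[of n n g] by simp
qed


type_synonym lp = "(nat \<Rightarrow>\<^sub>0 int) \<Rightarrow>\<^sub>0 complex"

definition kmap :: "('a \<Rightarrow> 'b) \<Rightarrow> ('a \<Rightarrow>\<^sub>0 'c::comm_monoid_add) \<Rightarrow> ('b \<Rightarrow>\<^sub>0 'c)" where
  "kmap \<phi> P = (\<Sum>k\<in>Poly_Mapping.keys P. Poly_Mapping.single (\<phi> k) (Poly_Mapping.lookup P k))"

lemma kmap_superset:
  assumes "finite F" "Poly_Mapping.keys P \<subseteq> F"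
  shows "kmap \<phi> P = (\<Sum>k\<in>F. Poly_Mapping.single (\<phi> k) (Poly_Mapping.lookup P k))"
  unfolding kmap_def using assms
  by (intro sum.mono_neutral_left) (auto simp: in_keys_iff)

lemma kmap_add: "kmap \<phi> (P + Q) = kmap \<phi> P + kmap \<phi> Q"
proof -
  have F: "finite (Poly_Mapping.keys P \<union> Poly_Mapping.keys Q)" by simp
  have "kmap \<phi> (P + Q) = (\<Sum>k\<in>Poly_Mapping.keys P \<union> Poly_Mapping.keys Q. Poly_Mapping.single (\<phi> k) (Poly_Mapping.lookup (P + Q) k))"
    using keys_add[of P Q] by (intro kmap_superset F) auto
  also have "\<dots> = (\<Sum>k\<in>Poly_Mapping.keys P \<union> Poly_Mapping.keys Q. Poly_Mapping.single (\<phi> k) (Poly_Mapping.lookup P k)) + (\<Sum>k\<in>Poly_Mapping.keys P \<union> Poly_Mapping.keys Q. Poly_Mapping.single (\<phi> k) (Poly_Mapping.lookup Q k))"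
    by (simp add: lookup_add single_add sum.distrib)
  also have "\<dots> = kmap \<phi> P + kmap \<phi> Q"
    by (subst (1 2) kmap_superset[OF F]) auto
  finally show ?thesis .
qed

lemma kmap_zero [simp]: "kmap \<phi> 0 = 0" by (simp add: kmap_def)

lemma kmap_single [simp]: "kmap \<phi> (Poly_Mapping.single k c) = Poly_Mapping.single (\<phi> k) c"
  by (cases "c = 0") (auto simp: kmap_def)

lemma kmap_sum: "kmap \<phi> (sum f A) = (\<Sum>a\<in>A. kmap \<phi> (f a))"
  by (induction A rule: infinite_finite_induct) (auto simp: kmap_add)

lemma pm_expand: "P = (\<Sum>k\<in>Poly_Mapping.keys P. Poly_Mapping.single k (Poly_Mapping.lookup P k))"
proof (rule poly_mapping_eqI)
  fix k'
  have "Poly_Mapping.lookup (\<Sum>k\<in>Poly_Mapping.keys P. Poly_Mapping.single k (Poly_Mapping.lookup P k)) k' = (\<Sum>k\<in>Poly_Mapping.keys P. (Poly_Mapping.lookup P k when k = k'))"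
    by (simp add: lookup_sum lookup_single)
  also have "\<dots> = Poly_Mapping.lookup P k'"
    by (cases "k' \<in> Poly_Mapping.keys P") (auto simp: in_keys_iff when_def sum.delta' cong: sum.cong)
  finally show "Poly_Mapping.lookup P k' = Poly_Mapping.lookup (\<Sum>k\<in>Poly_Mapping.keys P. Poly_Mapping.single k (Poly_Mapping.lookup P k)) k'" by simp
qed

lemma kmap_mult:
  fixes P Q :: "('a::monoid_add) \<Rightarrow>\<^sub>0 'c::comm_semiring_1"
  assumes add: "\<And>a b. \<phi> (a + b) = \<phi> a + \<phi> b"
  shows "kmap \<phi> (P * Q) = kmap \<phi> P * kmap \<phi> Q"
proof -
  have "P * Q = (\<Sum>k\<in>Poly_Mapping.keys P. Poly_Mapping.single k (Poly_Mapping.lookup P k)) * (\<Sum>l\<in>Poly_Mapping.keys Q. Poly_Mapping.single l (Poly_Mapping.lookup Q l))"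
    by (subst (1) pm_expand[of P], subst (1) pm_expand[of Q]) simp
  also have "\<dots> = (\<Sum>k\<in>Poly_Mapping.keys P. \<Sum>l\<in>Poly_Mapping.keys Q. Poly_Mapping.single (k + l) (Poly_Mapping.lookup P k * Poly_Mapping.lookup Q l))"
    by (simp add: sum_product mult_single)
  finally have "kmap \<phi> (P * Q) = (\<Sum>k\<in>Poly_Mapping.keys P. \<Sum>l\<in>Poly_Mapping.keys Q. Poly_Mapping.single (\<phi> k + \<phi> l) (Poly_Mapping.lookup P k * Poly_Mapping.lookup Q l))"
    by (simp add: kmap_sum add)
  also have "\<dots> = kmap \<phi> P * kmap \<phi> Q"
    by (simp add: kmap_def sum_product mult_single)
  finally show ?thesis .
qed

definition gshift :: "nat \<Rightarrow> nat \<Rightarrow> nat" where "gshift n j = (if n < j then j - n else j)"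

definition Sg :: "nat \<Rightarrow> lp \<Rightarrow> lp" where "Sg n = kmap (kmap (gshift n))"

lemma Sg_hom: "comm_ring_hom (Sg n)"
proof unfold_locales
  fix x y :: lp
  show "Sg n (x + y) = Sg n x + Sg n y" by (simp add: Sg_def kmap_add)
  show "Sg n (x * y) = Sg n x * Sg n y" unfolding Sg_def by (rule kmap_mult) (simp add: kmap_add)
  show "Sg n 1 = 1" unfolding Sg_def by (simp flip: single_one)
  show "Sg n 0 = 0" unfolding Sg_def by simp
qed

definition Y :: "nat \<Rightarrow> int \<Rightarrow> lp" where "Y i z = Poly_Mapping.single (Poly_Mapping.single i z) 1"

lemma Y_add: "Y i (a + b) = Y i a * Y i b" by (simp add: Y_def mult_single single_add)
lemma Y_0 [simp]: "Y i 0 = 1" by (simp add: Y_def)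
lemma Y_pow: "Y i z ^ k = Y i (int k * z)"
  by (induction k) (auto simp: Y_add algebra_simps)
lemma Y_neq:
  assumes "i \<noteq> j" "a \<noteq> 0" shows "Y i a \<noteq> Y j b"
proof
  assume "Y i a = Y j b"
  hence "Poly_Mapping.lookup (Y i a) (Poly_Mapping.single i a) = Poly_Mapping.lookup (Y j b) (Poly_Mapping.single i a)" by simp
  hence "Poly_Mapping.single j b = Poly_Mapping.single i a" by (simp add: Y_def lookup_single when_def split: if_splits)
  hence "Poly_Mapping.lookup (Poly_Mapping.single j b) i = Poly_Mapping.lookup (Poly_Mapping.single i a) i" by simp
  thus False using assms by (simp add: lookup_single when_def)
qed

lemma Sg_Y: "Sg n (Y i z) = Y (gshift n i) z"
  by (simp add: Sg_def Y_def)


lemma prod_1N_shift: "(\<Prod>i\<in>{1..N}. f i) = (\<Prod>i<N. f (Suc i))"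
  by (induction N) (simp_all add: prod.cl_ivl_Suc sum.cl_ivl_Suc mult.commute add.commute)

lemma sum_1N_shift: "(\<Sum>i\<in>{1..N}. f i) = (\<Sum>i<N. f (Suc i))"
  by (induction N) (simp_all add: prod.cl_ivl_Suc sum.cl_ivl_Suc mult.commute add.commute)

definition shiftp :: "nat \<Rightarrow> (nat \<Rightarrow> nat) \<Rightarrow> nat \<Rightarrow> nat" where
  "shiftp N p = (\<lambda>x. if x \<in> {1..N} then Suc (p (x - 1)) else x)"
definition unshiftp :: "nat \<Rightarrow> (nat \<Rightarrow> nat) \<Rightarrow> nat \<Rightarrow> nat" where
  "unshiftp N q = (\<lambda>x. if x \<in> {0..<N} then q (Suc x) - 1 else x)"

lemma shiftp_props:
  assumes "p permutes {0..<N}"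
  shows "shiftp N p permutes {1..N}" "sign (shiftp N p) = sign p"
proof -
  interpret permutes_bij_finite p "{0..<N}" "{1..N}" Suc "\<lambda>x. x - 1" "shiftp N p"
  proof -
    have b: "bij_betw Suc {0..<N} {1..N}" by (rule bij_betw_byWitness[where f'="\<lambda>x. x - 1"]) auto
    show "permutes_bij_finite p {0..<N} {1..N} Suc (\<lambda>x. x - 1)" using assms b by unfold_locales auto
    show "shiftp N p \<equiv> (\<lambda>x. if x \<in> {1..N} then Suc (p (x - 1)) else x)" by (rule eq_reflection) (simp add: shiftp_def)
  qed
  show "shiftp N p permutes {1..N}" by (rule permutes_p')
  show "sign (shiftp N p) = sign p" by (rule sign_p')
qed

lemma unshiftp_props:
  assumes "q permutes {1..N}"
  shows "unshiftp N q permutes {0..<N}" "sign (unshiftp N q) = sign q"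
proof -
  interpret permutes_bij_finite q "{1..N}" "{0..<N}" "\<lambda>x. x - 1" Suc "unshiftp N q"
  proof -
    have b: "bij_betw (\<lambda>x. x - 1) {1..N} {0..<N}" by (rule bij_betw_byWitness[where f'=Suc]) auto
    show "permutes_bij_finite q {1..N} {0..<N} (\<lambda>x. x - 1) Suc" using assms b by unfold_locales auto
    show "unshiftp N q \<equiv> (\<lambda>x. if x \<in> {0..<N} then q (Suc x) - 1 else x)" by (rule eq_reflection) (simp add: unshiftp_def)
  qed
  show "unshiftp N q permutes {0..<N}" by (rule permutes_p')
  show "sign (unshiftp N q) = sign q" by (rule sign_p')
qed

lemma perm_shift_sum:
  fixes H :: "(nat \<Rightarrow> nat) \<Rightarrow> 'a::comm_ring_1"
  shows "(\<Sum>q | q permutes {1..N}. of_int (sign q) * H q) =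
         (\<Sum>p | p permutes {0..<N}. of_int (sign p) * H (shiftp N p))"
proof (rule sum.reindex_bij_witness[of _ "shiftp N" "unshiftp N"])
  fix q assume q: "q \<in> {q. q permutes {1..N}}"
  hence qq: "q permutes {1..N}" by simp
  show "unshiftp N q \<in> {p. p permutes {0..<N}}" using unshiftp_props[OF qq] by simp
  show sq: "shiftp N (unshiftp N q) = q"
  proof
    fix x
    show "shiftp N (unshiftp N q) x = q x"
    proof (cases "x \<in> {1..N}")
      case True
      hence "q x \<in> {1..N}" using permutes_in_image[OF qq] by blast
      thus ?thesis using True by (auto simp: shiftp_def unshiftp_def)
    next
      case False
      thus ?thesis using qq by (auto simp: shiftp_def permutes_not_in)
    qed
  qed
  show "of_int (sign (unshiftp N q)) * H (shiftp N (unshiftp N q)) = of_int (sign q) * H q"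
    using unshiftp_props[OF qq] sq by simp
next
  fix p assume p: "p \<in> {p. p permutes {0..<N}}"
  hence pp: "p permutes {0..<N}" by simp
  show "shiftp N p \<in> {q. q permutes {1..N}}" using shiftp_props[OF pp] by simp
  show "unshiftp N (shiftp N p) = p"
  proof
    fix x
    show "unshiftp N (shiftp N p) x = p x"
    proof (cases "x \<in> {0..<N}")
      case True
      thus ?thesis by (auto simp: shiftp_def unshiftp_def)
    next
      case False
      thus ?thesis using pp by (auto simp: unshiftp_def permutes_not_in)
    qed
  qed
qed

definition Dl :: "nat \<Rightarrow> (nat \<Rightarrow> 'a::comm_ring_1) \<Rightarrow> 'a" where
  "Dl N x = (\<Prod>j<N. \<Prod>i<j. (x (Suc j) - x (Suc i)))"

lemma vdm1:
  fixes x :: "nat \<Rightarrow> 'a::comm_ring_1"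
  shows "(\<Sum>q | q permutes {1..N}. of_int (sign q) * (\<Prod>i\<in>{1..N}. x i ^ q i)) = (\<Prod>i\<in>{1..N}. x i) * Dl N x"
proof -
  have "(\<Sum>q | q permutes {1..N}. of_int (sign q) * (\<Prod>i\<in>{1..N}. x i ^ q i)) =
        (\<Sum>p | p permutes {0..<N}. of_int (sign p) * (\<Prod>i\<in>{1..N}. x i ^ shiftp N p i))"
    by (rule perm_shift_sum)
  also have "\<dots> = (\<Sum>p | p permutes {0..<N}. (\<Prod>i<N. x (Suc i)) * (of_int (sign p) * (\<Prod>i<N. x (Suc i) ^ p i)))"
  proof (intro sum.cong refl)
    fix p
    have "(\<Prod>i\<in>{1..N}. x i ^ shiftp N p i) = (\<Prod>i<N. x (Suc i) ^ shiftp N p (Suc i))" by (rule prod_1N_shift)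
    also have "\<dots> = (\<Prod>i<N. x (Suc i) * x (Suc i) ^ p i)" by (intro prod.cong refl) (simp add: shiftp_def)
    also have "\<dots> = (\<Prod>i<N. x (Suc i)) * (\<Prod>i<N. x (Suc i) ^ p i)" by (rule prod.distrib)
    finally show "of_int (sign p) * (\<Prod>i\<in>{1..N}. x i ^ shiftp N p i) = (\<Prod>i<N. x (Suc i)) * (of_int (sign p) * (\<Prod>i<N. x (Suc i) ^ p i))"
      by (simp add: ac_simps)
  qed
  also have "\<dots> = (\<Prod>i<N. x (Suc i)) * (\<Sum>p | p permutes {0..<N}. of_int (sign p) * (\<Prod>i<N. x (Suc i) ^ p i))"
    by (simp add: sum_distrib_left)
  also have "\<dots> = (\<Prod>i\<in>{1..N}. x i) * Dl N x"
    by (simp only: vdm0 prod_1N_shift[of x N] Dl_def)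
  finally show ?thesis .
qed


lemma prod_pairs_lt: "(\<Prod>k<2*(n::nat). (f k :: 'a::comm_monoid_mult)) = (\<Prod>i<n. f (2*i) * f (2*i+1))"
  by (induction n) (simp_all add: ac_simps)

lemma prod_pairs: "(\<Prod>k\<in>{1..2*(n::nat)}. (f k :: 'a::comm_monoid_mult)) = (\<Prod>i\<in>{1..n}. f (2*i-1) * f (2*i))"
  by (subst (1 2) prod_1N_shift) (simp add: prod_pairs_lt)

lemma prod_1N_shift': "(\<Prod>i\<in>{Suc 0..N}. f i) = (\<Prod>i<N. f (Suc i))"
  using prod_1N_shift[of f N] by simp

lemma Dpair:
  fixes y :: "nat \<Rightarrow> 'a::comm_ring_1"
  shows "(\<Prod>j<2*n. \<Prod>l<j. (y j - y l)) =
    (\<Prod>i<n. (y (2*i+1) - y (2*i))) *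
    (\<Prod>i<n. \<Prod>l<i. (y (2*i) - y (2*l)) * (y (2*i) - y (2*l+1)) * (y (2*i+1) - y (2*l)) * (y (2*i+1) - y (2*l+1)))"
proof -
  have a: "(\<Prod>l<2*i. (y (2*i) - y l)) = (\<Prod>l<i. (y (2*i) - y (2*l)) * (y (2*i) - y (2*l+1)))" for i
    by (rule prod_pairs_lt)
  have b: "(\<Prod>l<2*i+1. (y (2*i+1) - y l)) = (y (2*i+1) - y (2*i)) * (\<Prod>l<i. (y (2*i+1) - y (2*l)) * (y (2*i+1) - y (2*l+1)))" for i
    using prod_pairs_lt[of "\<lambda>l. y (2*i+1) - y l" i] by (simp add: ac_simps)
  show ?thesis
    unfolding prod_pairs_lt[of "\<lambda>j. \<Prod>l<j. (y j - y l)"] a b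
    by (simp add: prod.distrib ac_simps)
qed

definition UU :: "nat \<Rightarrow> lp" where "UU i = Y i (-1)"
definition VV :: "nat \<Rightarrow> nat \<Rightarrow> lp" where "VV n i = Y (n + i) (-1)"

definition xx :: "nat \<Rightarrow> nat \<Rightarrow> lp" where
  "xx n k = (if odd k then UU ((k + 1) div 2) else VV n (k div 2))"

lemma xx_odd: "i \<ge> 1 \<Longrightarrow> xx n (2*i-1) = UU i"
  by (auto simp: xx_def)
lemma xx_odd': "i \<ge> 1 \<Longrightarrow> xx n (2*i - Suc 0) = UU i"
  using xx_odd by simp
lemma xx_even: "xx n (2*i) = VV n i" by (simp add: xx_def)

lemma sub_factor:
  fixes u v :: "'a::comm_ring_1"
  assumes "a < b"
  shows "u ^ a * v ^ b - u ^ b * v ^ a = (v - u) * (u ^ a * v ^ a * (\<Sum>t<b - a. u ^ (b - a - Suc t) * v ^ t))"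
proof -
  have ub: "u ^ b = u ^ a * u ^ (b - a)" "v ^ b = v ^ a * v ^ (b - a)" using assms by (simp_all flip: power_add)
  have "u ^ a * v ^ b - u ^ b * v ^ a = u ^ a * v ^ a * (v ^ (b - a) - u ^ (b - a))"
    unfolding ub by (simp add: algebra_simps)
  also have "v ^ (b - a) - u ^ (b - a) = (v - u) * (\<Sum>t<b - a. u ^ (b - a - Suc t) * v ^ t)"
    by (rule power_diff_sumr2)
  finally show ?thesis by (simp add: ac_simps)
qed

definition Kf :: "nat \<Rightarrow> (nat \<Rightarrow> nat) \<Rightarrow> nat \<Rightarrow> lp" where
  "Kf n \<sigma> i = UU i ^ \<sigma> (2*i-1) * VV n i ^ \<sigma> (2*i-1) *
      (\<Sum>t<\<sigma> (2*i) - \<sigma> (2*i-1). UU i ^ (\<sigma> (2*i) - \<sigma> (2*i-1) - Suc t) * VV n i ^ t)"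

lemma conf_step1:
  "(\<Prod>i\<in>{1..n}. VV n i - UU i) * (\<Sum>\<sigma>\<in>E_perms n. of_int (sign \<sigma>) * (\<Prod>i\<in>{1..n}. Kf n \<sigma> i)) =
   (\<Prod>i\<in>{1..n}. VV n i - UU i) * ((\<Prod>i\<in>{1..n}. UU i * VV n i) *
    (\<Prod>i<n. \<Prod>l<i. (UU (i+1) - UU (l+1)) * (UU (i+1) - VV n (l+1)) * (VV n (i+1) - UU (l+1)) * (VV n (i+1) - VV n (l+1))))"
proof -
  have "(\<Sum>\<pi> | \<pi> permutes {1..2*n}. of_int (sign \<pi>) * (\<Prod>k\<in>{1..2*n}. xx n k ^ \<pi> k)) =
        (\<Prod>k\<in>{1..2*n}. xx n k) * Dl (2*n) (xx n)"
    by (rule vdm1)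
  also have "(\<Sum>\<pi> | \<pi> permutes {1..2*n}. of_int (sign \<pi>) * (\<Prod>k\<in>{1..2*n}. xx n k ^ \<pi> k)) =
      (\<Sum>\<pi> | \<pi> permutes {1..2*n}. of_int (sign \<pi>) * (\<Prod>i\<in>{1..n}. UU i ^ \<pi> (2*i-1) * VV n i ^ \<pi> (2*i)))"
    by (intro sum.cong refl arg_cong2[where f="(*)"]) (simp only: prod_pairs, intro prod.cong refl, auto simp: xx_odd xx_odd' xx_even)
  also have "\<dots> = (\<Sum>\<sigma>\<in>E_perms n. of_int (sign \<sigma>) * (\<Prod>i\<in>{1..n}. UU i ^ \<sigma> (2*i-1) * VV n i ^ \<sigma> (2*i) - UU i ^ \<sigma> (2*i) * VV n i ^ \<sigma> (2*i-1)))"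
    by (rule fold_perm)
  also have "\<dots> = (\<Sum>\<sigma>\<in>E_perms n. of_int (sign \<sigma>) * (\<Prod>i\<in>{1..n}. (VV n i - UU i) * Kf n \<sigma> i))"
  proof (intro sum.cong refl arg_cong2[where f="(*)"] prod.cong)
    fix \<sigma> i assume "\<sigma> \<in> E_perms n" "i \<in> {1..n}"
    hence "\<sigma> (2*i-1) < \<sigma> (2*i)" by (auto simp: E_perms_def)
    thus "UU i ^ \<sigma> (2*i-1) * VV n i ^ \<sigma> (2*i) - UU i ^ \<sigma> (2*i) * VV n i ^ \<sigma> (2*i-1) = (VV n i - UU i) * Kf n \<sigma> i"
      unfolding Kf_def by (rule sub_factor)
  qed
  also have "\<dots> = (\<Prod>i\<in>{1..n}. VV n i - UU i) * (\<Sum>\<sigma>\<in>E_perms n. of_int (sign \<sigma>) * (\<Prod>i\<in>{1..n}. Kf n \<sigma> i))"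
    by (simp add: prod.distrib sum_distrib_left ac_simps)
  also have "(\<Prod>k\<in>{1..2*n}. xx n k) = (\<Prod>i\<in>{1..n}. UU i * VV n i)"
    by (simp only: prod_pairs, intro prod.cong refl, auto simp: xx_odd xx_odd' xx_even)
  also have "Dl (2*n) (xx n) = (\<Prod>i<n. (xx n (Suc (2*i+1)) - xx n (Suc (2*i)))) *
    (\<Prod>i<n. \<Prod>l<i. (xx n (Suc (2*i)) - xx n (Suc (2*l))) * (xx n (Suc (2*i)) - xx n (Suc (2*l+1))) * (xx n (Suc (2*i+1)) - xx n (Suc (2*l))) * (xx n (Suc (2*i+1)) - xx n (Suc (2*l+1))))"
    unfolding Dl_def by (rule Dpair)
  also have "\<dots> = (\<Prod>i\<in>{1..n}. VV n i - UU i) *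
    (\<Prod>i<n. \<Prod>l<i. (UU (i+1) - UU (l+1)) * (UU (i+1) - VV n (l+1)) * (VV n (i+1) - UU (l+1)) * (VV n (i+1) - VV n (l+1)))"
  proof -
    have o: "xx n (Suc (2*i)) = UU (i+1)" for i using xx_odd[of "i+1" n] by simp
    have e: "xx n (Suc (2*i+1)) = VV n (i+1)" for i using xx_even[of n "i+1"] by simp
    show ?thesis unfolding o e by (subst prod_1N_shift) (simp only: Suc_eq_plus1)
  qed
  finally show ?thesis by (simp add: ac_simps)
qed

lemma VU_nz: "n \<ge> 0 \<Longrightarrow> (\<Prod>i\<in>{1..n}. VV n i - UU i) \<noteq> 0"
proof -
  have "VV n i - UU i \<noteq> 0" if "i \<in> {1..n}" for i
    using that Y_neq[of "n+i" i "-1" "-1"] by (auto simp: VV_def UU_def)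
  thus ?thesis by (subst prod_zero_iff) auto
qed

lemma conf_H:
  "(\<Sum>\<sigma>\<in>E_perms n. of_int (sign \<sigma>) * (\<Prod>i\<in>{1..n}. Kf n \<sigma> i)) =
   (\<Prod>i\<in>{1..n}. UU i * VV n i) *
    (\<Prod>i<n. \<Prod>l<i. (UU (i+1) - UU (l+1)) * (UU (i+1) - VV n (l+1)) * (VV n (i+1) - UU (l+1)) * (VV n (i+1) - VV n (l+1)))"
  using conf_step1[of n] VU_nz[of n] by simp

lemma Sg_UU: "i \<le> n \<Longrightarrow> Sg n (UU i) = UU i"
  by (simp add: UU_def Sg_Y gshift_def)
lemma Sg_VV: "i \<ge> 1 \<Longrightarrow> Sg n (VV n i) = UU i"
  by (simp add: UU_def VV_def Sg_Y gshift_def)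

lemma confluent:
  "(\<Sum>\<sigma>\<in>E_perms n. of_int (sign \<sigma>) * (\<Prod>i\<in>{1..n}. of_nat (\<sigma> (2*i) - \<sigma> (2*i-1)) * UU i ^ (\<sigma> (2*i-1) + \<sigma> (2*i) - 1))) =
   (\<Prod>i\<in>{1..n}. UU i ^ 2) * Dl n UU ^ 4"
proof -
  interpret S: comm_ring_hom "Sg n" by (rule Sg_hom)
  have "Sg n (\<Sum>\<sigma>\<in>E_perms n. of_int (sign \<sigma>) * (\<Prod>i\<in>{1..n}. Kf n \<sigma> i)) =
    (\<Sum>\<sigma>\<in>E_perms n. of_int (sign \<sigma>) * (\<Prod>i\<in>{1..n}. of_nat (\<sigma> (2*i) - \<sigma> (2*i-1)) * UU i ^ (\<sigma> (2*i-1) + \<sigma> (2*i) - 1)))"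
  proof -
    have "Sg n (Kf n \<sigma> i) = of_nat (\<sigma> (2*i) - \<sigma> (2*i-1)) * UU i ^ (\<sigma> (2*i-1) + \<sigma> (2*i) - 1)"
      if "\<sigma> \<in> E_perms n" "i \<in> {1..n}" for \<sigma> i
    proof -
      have lt: "\<sigma> (2*i-1) < \<sigma> (2*i)" using that by (auto simp: E_perms_def)
      define a where "a = \<sigma> (2*i-1)"
      define c where "c = \<sigma> (2*i) - \<sigma> (2*i-1)"
      have c: "c \<ge> 1" "\<sigma> (2*i-1) + \<sigma> (2*i) - 1 = a + a + (c - 1)" using lt by (auto simp: a_def c_def)
      have iu: "Sg n (UU i) = UU i" "Sg n (VV n i) = UU i" using that by (auto intro!: Sg_UU Sg_VV)
      have "Sg n (Kf n \<sigma> i) = UU i ^ a * UU i ^ a * (\<Sum>t<c. UU i ^ (c - Suc t) * UU i ^ t)"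
        unfolding Kf_def unfolding c_def[symmetric] unfolding a_def[symmetric]
        by (simp only: hom_distribs iu)
      also have "(\<Sum>t<c. UU i ^ (c - Suc t) * UU i ^ t) = (\<Sum>t<c. UU i ^ (c - 1))"
        by (intro sum.cong refl) (auto simp flip: power_add)
      also have "\<dots> = of_nat c * UU i ^ (c - 1)" by simp
      finally show ?thesis unfolding c(2) c_def[symmetric] by (simp add: power_add ac_simps)
    qed
    thus ?thesis by (simp add: hom_distribs)
  qed
  also have "Sg n (\<Sum>\<sigma>\<in>E_perms n. of_int (sign \<sigma>) * (\<Prod>i\<in>{1..n}. Kf n \<sigma> i)) =
     (\<Prod>i\<in>{1..n}. UU i ^ 2) * (\<Prod>i<n. \<Prod>l<i. (UU (i+1) - UU (l+1)) ^ 4)"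
  proof -
    have "Sg n ((\<Prod>i\<in>{1..n}. UU i * VV n i)) = (\<Prod>i\<in>{1..n}. UU i ^ 2)"
      by (auto simp: hom_distribs Sg_UU Sg_VV power2_eq_square intro!: prod.cong)
    moreover have "Sg n (\<Prod>i<n. \<Prod>l<i. (UU (i+1) - UU (l+1)) * (UU (i+1) - VV n (l+1)) * (VV n (i+1) - UU (l+1)) * (VV n (i+1) - VV n (l+1)))
        = (\<Prod>i<n. \<Prod>l<i. (UU (i+1) - UU (l+1)) ^ 4)"
      by (auto simp: hom_distribs Sg_UU Sg_VV intro!: prod.cong) (simp add: power4_eq_xxxx)
    ultimately show ?thesis unfolding conf_H by (simp add: hom_distribs)
  qed
  also have "(\<Prod>i<n. \<Prod>l<i. (UU (i+1) - UU (l+1)) ^ 4) = Dl n UU ^ 4"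
    by (simp add: Dl_def prod_power_distrib)
  finally show ?thesis by simp
qed


definition evec :: "(nat \<Rightarrow> int) \<Rightarrow> nat set \<Rightarrow> (nat \<Rightarrow>\<^sub>0 int)" where
  "evec f S = (\<Sum>i\<in>S. Poly_Mapping.single i (f i))"

lemma lookup_vec: "finite S \<Longrightarrow> Poly_Mapping.lookup (evec f S) j = (if j \<in> S then f j else 0)"
  by (simp add: evec_def lookup_sum lookup_single when_def sum.delta')

lemma single_prod:
  fixes c :: "'b \<Rightarrow> 'a::comm_semiring_1"
  shows "(\<Prod>j\<in>J. Poly_Mapping.single (a j) (c j)) = Poly_Mapping.single (\<Sum>j\<in>J. a j) (\<Prod>j\<in>J. c j)"
  by (induction J rule: infinite_finite_induct) (simp_all add: mult_single)

lemma single_sum: "(\<Sum>j\<in>J. Poly_Mapping.single i (g j)) = Poly_Mapping.single i (\<Sum>j\<in>J. g j)"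
  by (induction J rule: infinite_finite_induct) (simp_all add: single_add)

lemma vec_sum: "(\<Sum>j\<in>J. evec (f j) S) = evec (\<lambda>i. \<Sum>j\<in>J. f j i) S"
  unfolding evec_def by (subst sum.swap) (simp add: single_sum)

lemma single_vec:
  "finite S \<Longrightarrow> Poly_Mapping.single (evec f S) c = Poly_Mapping.single 0 c * (\<Prod>i\<in>S. Y i (f i))"
  unfolding evec_def Y_def by (simp add: single_prod mult_single)

lemma single_vec_int:
  "finite S \<Longrightarrow> Poly_Mapping.single (evec f S) (of_int z) = of_int z * (\<Prod>i\<in>S. Y i (f i))"
  by (simp add: single_vec)

definition Wp :: "nat \<Rightarrow> int \<Rightarrow> lp" where
  "Wp n s = (\<Sum>\<tau> | \<tau> permutes {1..n}. Poly_Mapping.single (evec (\<lambda>i. s * int (\<tau> i)) {1..n}) (of_int (sign \<tau>)))"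

definition Gp :: "nat \<Rightarrow> lp" where
  "Gp n = (\<Sum>\<sigma>\<in>E_perms n. Poly_Mapping.single (evec (\<lambda>i. int (2*n+1) - int (\<sigma> (2*i-1)) - int (\<sigma> (2*i))) {1..n})
      (of_int (sign \<sigma>) * (\<Prod>i\<in>{1..n}. of_int (int (\<sigma> (2*i)) - int (\<sigma> (2*i-1))))))"

definition XX :: "nat \<Rightarrow> lp" where "XX i = Y i 1"

lemma XX_UU: "XX i * UU i = 1" by (simp add: XX_def UU_def flip: Y_add)

lemma Wp_plus: "Wp n 1 = (\<Prod>i\<in>{1..n}. XX i) * Dl n XX"
proof -
  have "Wp n 1 = (\<Sum>\<tau> | \<tau> permutes {1..n}. of_int (sign \<tau>) * (\<Prod>i\<in>{1..n}. XX i ^ \<tau> i))"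
    unfolding Wp_def by (intro sum.cong refl) (simp add: single_vec_int XX_def Y_pow)
  also have "\<dots> = (\<Prod>i\<in>{1..n}. XX i) * Dl n XX" by (rule vdm1)
  finally show ?thesis .
qed

lemma Wp_minus: "Wp n (-1) = (\<Prod>i\<in>{1..n}. UU i) * Dl n UU"
proof -
  have "Wp n (-1) = (\<Sum>\<tau> | \<tau> permutes {1..n}. of_int (sign \<tau>) * (\<Prod>i\<in>{1..n}. UU i ^ \<tau> i))"
    unfolding Wp_def by (intro sum.cong refl) (simp add: single_vec_int UU_def Y_pow)
  also have "\<dots> = (\<Prod>i\<in>{1..n}. UU i) * Dl n UU" by (rule vdm1)
  finally show ?thesis .
qed

lemma Gp_conf: "Gp n = (\<Prod>i\<in>{1..n}. XX i ^ (2*n)) * ((\<Prod>i\<in>{1..n}. UU i ^ 2) * Dl n UU ^ 4)"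
proof -
  have "Gp n = (\<Sum>\<sigma>\<in>E_perms n. (\<Prod>i\<in>{1..n}. XX i ^ (2*n)) * (of_int (sign \<sigma>) *
     (\<Prod>i\<in>{1..n}. of_nat (\<sigma> (2*i) - \<sigma> (2*i-1)) * UU i ^ (\<sigma> (2*i-1) + \<sigma> (2*i) - 1))))"
    unfolding Gp_def
  proof (intro sum.cong refl)
    fix \<sigma> assume s: "\<sigma> \<in> E_perms n"
    have lt: "\<sigma> (2*i-1) < \<sigma> (2*i)" if "i \<in> {1..n}" for i using s that by (auto simp: E_perms_def)
    have "Poly_Mapping.single (evec (\<lambda>i. int (2*n+1) - int (\<sigma> (2*i-1)) - int (\<sigma> (2*i))) {1..n})
      (of_int (sign \<sigma>) * (\<Prod>i\<in>{1..n}. of_int (int (\<sigma> (2*i)) - int (\<sigma> (2*i-1))))) =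
      of_int (sign \<sigma> * (\<Prod>i\<in>{1..n}. (int (\<sigma> (2*i)) - int (\<sigma> (2*i-1))))) *
      (\<Prod>i\<in>{1..n}. Y i (int (2*n+1) - int (\<sigma> (2*i-1)) - int (\<sigma> (2*i))))"
      by (subst single_vec_int[symmetric]) simp_all
    also have "\<dots> = of_int (sign \<sigma>) * (\<Prod>i\<in>{1..n}. of_int (int (\<sigma> (2*i)) - int (\<sigma> (2*i-1))) * Y i (int (2*n+1) - int (\<sigma> (2*i-1)) - int (\<sigma> (2*i))))"
      by (simp only: of_int_mult of_int_prod o_def mult.assoc prod.distrib)
    also have "\<dots> = of_int (sign \<sigma>) * (\<Prod>i\<in>{1..n}. XX i ^ (2*n) * (of_nat (\<sigma> (2*i) - \<sigma> (2*i-1)) * UU i ^ (\<sigma> (2*i-1) + \<sigma> (2*i) - 1)))"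
    proof (rule arg_cong2[where f="(*)"], rule refl, rule prod.cong, rule refl)
      fix i assume i: "i \<in> {1..n}"
      have l: "\<sigma> (2*i-1) < \<sigma> (2*i)" by (rule lt[OF i])
      have "Y i (int (2*n+1) - int (\<sigma> (2*i-1)) - int (\<sigma> (2*i))) = Y i (int (2*n) * 1) * Y i (int (\<sigma> (2*i-1) + \<sigma> (2*i) - 1) * (-1))"
        using l by (simp flip: Y_add) (simp add: algebra_simps of_nat_diff)
      also have "\<dots> = XX i ^ (2*n) * UU i ^ (\<sigma> (2*i-1) + \<sigma> (2*i) - 1)"
        by (simp add: XX_def UU_def Y_pow)
      finally show "of_int (int (\<sigma> (2*i)) - int (\<sigma> (2*i-1))) * Y i (int (2*n+1) - int (\<sigma> (2*i-1)) - int (\<sigma> (2*i))) =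
         XX i ^ (2*n) * (of_nat (\<sigma> (2*i) - \<sigma> (2*i-1)) * UU i ^ (\<sigma> (2*i-1) + \<sigma> (2*i) - 1))"
        using l by (simp add: of_nat_diff ac_simps)
    qed
    also have "\<dots> = (\<Prod>i\<in>{1..n}. XX i ^ (2*n)) * (of_int (sign \<sigma>) *
     (\<Prod>i\<in>{1..n}. of_nat (\<sigma> (2*i) - \<sigma> (2*i-1)) * UU i ^ (\<sigma> (2*i-1) + \<sigma> (2*i) - 1)))"
      by (simp add: prod.distrib ac_simps)
    finally show "Poly_Mapping.single (evec (\<lambda>i. int (2*n+1) - int (\<sigma> (2*i-1)) - int (\<sigma> (2*i))) {1..n})
      (of_int (sign \<sigma>) * (\<Prod>i\<in>{1..n}. of_int (int (\<sigma> (2*i)) - int (\<sigma> (2*i-1))))) = \<dots>" .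
  qed
  also have "\<dots> = (\<Prod>i\<in>{1..n}. XX i ^ (2*n)) * (\<Sum>\<sigma>\<in>E_perms n. of_int (sign \<sigma>) *
     (\<Prod>i\<in>{1..n}. of_nat (\<sigma> (2*i) - \<sigma> (2*i-1)) * UU i ^ (\<sigma> (2*i-1) + \<sigma> (2*i) - 1)))"
    by (simp add: sum_distrib_left)
  also have "\<dots> = (\<Prod>i\<in>{1..n}. XX i ^ (2*n)) * ((\<Prod>i\<in>{1..n}. UU i ^ 2) * Dl n UU ^ 4)"
    by (simp only: confluent)
  finally show ?thesis .
qed

lemma pair_prod: "(\<Prod>j<n. \<Prod>i<j. z i * z j) = (\<Prod>i<n. (z i :: 'a::comm_semiring_1) ^ (n - 1))"
proof (induction n)
  case (Suc n)
  have "(\<Prod>j<Suc n. \<Prod>i<j. z i * z j) = (\<Prod>j<n. \<Prod>i<j. z i * z j) * (\<Prod>i<n. z i * z n)"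
    by (simp only: prod.lessThan_Suc)
  also have "(\<Prod>i<n. z i * z n) = (\<Prod>i<n. z i) * z n ^ n" by (simp add: prod.distrib)
  also have "(\<Prod>j<n. \<Prod>i<j. z i * z j) = (\<Prod>i<n. z i ^ (n - 1))" by (rule Suc.IH)
  also have "(\<Prod>i<n. z i ^ (n - 1)) * ((\<Prod>i<n. z i) * z n ^ n) = (\<Prod>i<n. z i ^ (n - 1) * z i) * z n ^ n"
    by (simp only: prod.distrib mult.assoc)
  also have "(\<Prod>i<n. z i ^ (n - 1) * z i) = (\<Prod>i<n. z i ^ n)"
    by (intro prod.cong refl) (metis Suc_pred' lessThan_iff not_less0 power_Suc2 gr0I)
  also have "(\<Prod>i<n. z i ^ n) * z n ^ n = (\<Prod>i<Suc n. z i ^ (Suc n - 1))"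
    by (simp only: prod.lessThan_Suc diff_Suc_1)
  finally show ?case .
qed simp

lemma Dl_inv:
  "Dl n UU * (\<Prod>i\<in>{1..n}. XX i ^ (n - 1)) = (\<Prod>j<n. \<Prod>i<j. (XX (Suc i) - XX (Suc j)))"
proof -
  have "(\<Prod>i\<in>{1..n}. XX i ^ (n - 1)) = (\<Prod>j<n. \<Prod>i<j. XX (Suc i) * XX (Suc j))"
    by (simp add: pair_prod prod_1N_shift prod_1N_shift')
  moreover have "(UU (Suc j) - UU (Suc i)) * (XX (Suc i) * XX (Suc j)) = XX (Suc i) - XX (Suc j)" for i j
  proof -
    have "(UU (Suc j) - UU (Suc i)) * (XX (Suc i) * XX (Suc j)) =
      XX (Suc i) * (XX (Suc j) * UU (Suc j)) - XX (Suc j) * (XX (Suc i) * UU (Suc i))"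
      by (simp add: algebra_simps)
    thus ?thesis by (simp add: XX_UU)
  qed
  ultimately show ?thesis by (simp add: Dl_def prod.distrib[symmetric])
qed

lemma WG: "n \<ge> 1 \<Longrightarrow> Wp n 1 ^ 2 * Wp n (-1) ^ 2 = Gp n"
proof -
  assume n: "n \<ge> 1"
  define P where "P = (\<Prod>i\<in>{1..n}. XX i ^ (n - 1))"
  have XU: "(\<Prod>i\<in>{1..n}. XX i) * (\<Prod>i\<in>{1..n}. UU i) = 1"
    by (simp add: prod.distrib[symmetric] XX_UU)
  have DX: "Dl n XX ^ 2 = (Dl n UU * P) ^ 2"
  proof -
    have "Dl n XX ^ 2 = (\<Prod>j<n. \<Prod>i<j. (XX (Suc j) - XX (Suc i)) ^ 2)"
      by (simp add: Dl_def prod_power_distrib)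
    also have "\<dots> = (\<Prod>j<n. \<Prod>i<j. (XX (Suc i) - XX (Suc j)) ^ 2)"
      by (intro prod.cong refl) (simp add: power2_commute)
    also have "\<dots> = (Dl n UU * P) ^ 2"
      unfolding P_def Dl_inv by (simp add: prod_power_distrib)
    finally show ?thesis .
  qed
  have XP: "(\<Prod>i\<in>{1..n}. XX i ^ (2*n)) * (\<Prod>i\<in>{1..n}. UU i ^ 2) = P ^ 2"
  proof -
    have "XX i ^ (2*n) * UU i ^ 2 = (XX i ^ (n - 1)) ^ 2" for i
    proof -
      have en: "2*n = 2*(n-1) + 2" using n by simp
      have e: "XX i ^ (2*n) = XX i ^ (2*(n-1)) * XX i ^ 2" by (subst en) (rule power_add)
      have "XX i ^ (2*n) * UU i ^ 2 = XX i ^ (2*(n-1)) * (XX i * UU i) ^ 2"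
        unfolding e power_mult_distrib by (simp only: mult.assoc)
      also have "\<dots> = XX i ^ ((n-1) * 2)" unfolding XX_UU by (simp add: mult.commute)
      finally show ?thesis by (simp only: power_mult)
    qed
    thus ?thesis by (simp add: P_def prod.distrib[symmetric] prod_power_distrib)
  qed
  have "Wp n 1 ^ 2 * Wp n (-1) ^ 2 = ((\<Prod>i\<in>{1..n}. XX i) * (\<Prod>i\<in>{1..n}. UU i)) ^ 2 * Dl n XX ^ 2 * Dl n UU ^ 2"
    by (simp add: Wp_plus Wp_minus power_mult_distrib ac_simps)
  also have "\<dots> = P ^ 2 * Dl n UU ^ 4"
    unfolding XU DX by (simp add: power_mult_distrib ac_simps flip: power_add)
  also have "\<dots> = Gp n" unfolding Gp_conf XP[symmetric] by (simp add: ac_simps)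
  finally show ?thesis .
qed


definition Lf :: "(int \<Rightarrow> complex) \<Rightarrow> nat \<Rightarrow> lp \<Rightarrow> complex" where
  "Lf d n P = (\<Sum>k\<in>Poly_Mapping.keys P. Poly_Mapping.lookup P k * (\<Prod>i\<in>{1..n}. d (Poly_Mapping.lookup k i)))"

lemma Lf_superset:
  assumes "finite F" "Poly_Mapping.keys P \<subseteq> F"
  shows "Lf d n P = (\<Sum>k\<in>F. Poly_Mapping.lookup P k * (\<Prod>i\<in>{1..n}. d (Poly_Mapping.lookup k i)))"
  unfolding Lf_def using assms
  by (intro sum.mono_neutral_left) (auto simp: in_keys_iff)

lemma Lf_add: "Lf d n (P + Q) = Lf d n P + Lf d n Q"
proof -
  have F: "finite (Poly_Mapping.keys P \<union> Poly_Mapping.keys Q)" by simp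
  have "Lf d n (P + Q) = (\<Sum>k\<in>Poly_Mapping.keys P \<union> Poly_Mapping.keys Q. Poly_Mapping.lookup (P + Q) k * (\<Prod>i\<in>{1..n}. d (Poly_Mapping.lookup k i)))"
    using keys_add[of P Q] by (intro Lf_superset F) auto
  also have "\<dots> = Lf d n P + Lf d n Q"
    by (subst (1 2) Lf_superset[OF F]) (auto simp: lookup_add sum.distrib algebra_simps)
  finally show ?thesis .
qed

lemma Lf_zero [simp]: "Lf d n 0 = 0" by (simp add: Lf_def)

lemma Lf_sum: "Lf d n (sum f A) = (\<Sum>a\<in>A. Lf d n (f a))"
  by (induction A rule: infinite_finite_induct) (auto simp: Lf_add)

lemma Lf_single: "Lf d n (Poly_Mapping.single k c) = c * (\<Prod>i\<in>{1..n}. d (Poly_Mapping.lookup k i))"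
  by (cases "c = 0") (auto simp: Lf_def)

lemma Lf_vec: "Lf d n (Poly_Mapping.single (evec f {1..n}) c) = c * (\<Prod>i\<in>{1..n}. d (f i))"
  by (simp add: Lf_single lookup_vec)

lemma Lf_vec': "Lf d n (Poly_Mapping.single (evec f {Suc 0..n}) c) = c * (\<Prod>i\<in>{Suc 0..n}. d (f i))"
  using Lf_vec[of d n f c] by simp

lemma sum_sg:
  fixes x :: "nat \<Rightarrow> int"
  shows "(\<Sum>j<2*p. (if j < p then 1 else -1) * x j) = (\<Sum>j<p. x j) - (\<Sum>j\<in>{p..<2*p}. x j)"
proof -
  have u: "{..<2*p} = {..<p} \<union> {p..<2*p}" by auto
  have "(\<Sum>j<2*p. (if j < p then 1 else -1) * x j) = (\<Sum>j<p. (if j < p then 1 else -1) * x j) + (\<Sum>j\<in>{p..<2*p}. (if j < p then 1 else -1) * x j)"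
    unfolding u by (rule sum.union_disjoint) auto
  also have "\<dots> = (\<Sum>j<p. x j) + (\<Sum>j\<in>{p..<2*p}. - x j)"
    by (intro arg_cong2[where f="(+)"] sum.cong) auto
  finally show ?thesis by (simp add: sum_negf)
qed

lemma toeplitz_L:
  "toeplitz_hyperdet p n d = (1 / of_nat (fact n)) * Lf d n (Wp n 1 ^ p * Wp n (-1) ^ p)"
proof -
  define sg :: "nat \<Rightarrow> int" where "sg j = (if j < p then 1 else -1)" for j
  define F where "F j \<tau> = Poly_Mapping.single (evec (\<lambda>i. sg j * int (\<tau> i)) {1..n}) (of_int (sign \<tau>) :: complex)" for j \<tau>
  define PS where "PS = {\<tau>. \<tau> permutes {1..n}}"
  have fin: "finite PS" unfolding PS_def by (rule finite_permutations) simp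
  have W: "(\<Prod>j<2*p. Wp n (sg j)) = Wp n 1 ^ p * Wp n (-1) ^ p"
  proof -
    have u: "{..<2*p} = {..<p} \<union> {p..<2*p}" by auto
    have "(\<Prod>j<2*p. Wp n (sg j)) = (\<Prod>j<p. Wp n (sg j)) * (\<Prod>j\<in>{p..<2*p}. Wp n (sg j))"
      unfolding u by (rule prod.union_disjoint) auto
    also have "(\<Prod>j<p. Wp n (sg j)) = (\<Prod>j<p. Wp n 1)" by (intro prod.cong) (auto simp: sg_def)
    also have "(\<Prod>j\<in>{p..<2*p}. Wp n (sg j)) = (\<Prod>j\<in>{p..<2*p}. Wp n (-1))" by (intro prod.cong) (auto simp: sg_def)
    finally show ?thesis by simp
  qed
  have "Wp n 1 ^ p * Wp n (-1) ^ p = (\<Prod>j<2*p. \<Sum>\<tau>\<in>PS. F j \<tau>)"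
    unfolding W[symmetric] by (simp add: Wp_def F_def PS_def)
  hence "Lf d n (Wp n 1 ^ p * Wp n (-1) ^ p) = Lf d n (\<Prod>j<2*p. \<Sum>\<tau>\<in>PS. F j \<tau>)" by simp
  also have "\<dots> = Lf d n (\<Sum>\<sigma>\<in>PiE {..<2*p} (\<lambda>_. PS). \<Prod>j<2*p. F j (\<sigma> j))"
    by (simp add: prod_sum_PiE fin)
  also have "\<dots> = (\<Sum>\<sigma>\<in>PiE {..<2*p} (\<lambda>_. PS). Lf d n (\<Prod>j<2*p. F j (\<sigma> j)))" by (rule Lf_sum)
  also have "\<dots> = (\<Sum>\<sigma>\<in>PiE {..<2*p} (\<lambda>_. PS). (\<Prod>j<2*p. of_int (sign (\<sigma> j))) *
      (\<Prod>i\<in>{1..n}. d ((\<Sum>j<p. int (\<sigma> j i)) - (\<Sum>j\<in>{p..<2*p}. int (\<sigma> j i)))))"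
  proof (intro sum.cong refl)
    fix \<sigma>
    have "(\<Prod>j<2*p. F j (\<sigma> j)) = Poly_Mapping.single (evec (\<lambda>i. \<Sum>j<2*p. sg j * int (\<sigma> j i)) {1..n}) (\<Prod>j<2*p. of_int (sign (\<sigma> j)))"
      unfolding F_def single_prod vec_sum ..
    thus "Lf d n (\<Prod>j<2*p. F j (\<sigma> j)) = (\<Prod>j<2*p. of_int (sign (\<sigma> j))) *
      (\<Prod>i\<in>{1..n}. d ((\<Sum>j<p. int (\<sigma> j i)) - (\<Sum>j\<in>{p..<2*p}. int (\<sigma> j i))))"
      by (simp add: Lf_vec Lf_vec' sg_def sum_sg)
  qed
  finally show ?thesis
    unfolding toeplitz_hyperdet_def hyperdet_def PS_def by (simp add: atLeast0LessThan)
qed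

lemma sum_pairs_lt: "(\<Sum>k<2*(n::nat). (f k :: 'a::comm_monoid_add)) = (\<Sum>i<n. f (2*i) + f (2*i+1))"
  by (induction n) (simp_all add: ac_simps)

lemma hyperpf_L:
  "hyperpf m n (\<lambda>idx. (\<Prod>s<m. of_int (int (idx (2 * s + 1)) - int (idx (2 * s)))) *
              d (int ((2*n+1)*m) - (\<Sum>j<2*m. int (idx j)))) = (1 / of_nat (fact n)) * Lf d n (Gp n ^ m)"
proof -
  define e where "e \<sigma> i = int (2*n+1) - int (\<sigma> (2*i-1)) - int (\<sigma> (2*i))" for \<sigma> :: "nat \<Rightarrow> nat" and i
  define c where "c \<sigma> = (of_int (sign \<sigma>) * (\<Prod>i\<in>{1..n}. of_int (int (\<sigma> (2*i)) - int (\<sigma> (2*i-1)))) :: complex)" for \<sigma> :: "nat \<Rightarrow> nat"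
  define F where "F \<sigma> = Poly_Mapping.single (evec (e \<sigma>) {1..n}) (c \<sigma>)" for \<sigma>
  have fin: "finite (E_perms n)"
  proof -
    have "E_perms n \<subseteq> {\<pi>. \<pi> permutes {1..2*n}}" by (auto simp: E_perms_def)
    thus ?thesis by (rule finite_subset) (rule finite_permutations, simp)
  qed
  have G: "Gp n = (\<Sum>\<sigma>\<in>E_perms n. F \<sigma>)" unfolding Gp_def F_def e_def c_def ..
  have "Gp n ^ m = (\<Prod>s<m. \<Sum>\<sigma>\<in>E_perms n. F \<sigma>)" unfolding G by simp
  also have "\<dots> = (\<Sum>\<sigma>\<in>PiE {..<m} (\<lambda>_. E_perms n). \<Prod>s<m. F (\<sigma> s))"
    by (rule prod_sum_PiE) (simp_all add: fin)
  finally have "Lf d n (Gp n ^ m) = Lf d n (\<Sum>\<sigma>\<in>PiE {..<m} (\<lambda>_. E_perms n). \<Prod>s<m. F (\<sigma> s))" by simp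
  also have "\<dots> = (\<Sum>\<sigma>\<in>PiE {..<m} (\<lambda>_. E_perms n). Lf d n (\<Prod>s<m. F (\<sigma> s)))" by (rule Lf_sum)
  also have "\<dots> = (\<Sum>\<sigma>\<in>PiE {..<m} (\<lambda>_. E_perms n). (\<Prod>s<m. of_int (sign (\<sigma> s))) *
      (\<Prod>i\<in>{1..n}. (\<lambda>idx. (\<Prod>s<m. of_int (int (idx (2 * s + 1)) - int (idx (2 * s)))) *
              d (int ((2*n+1)*m) - (\<Sum>j<2*m. int (idx j)))) (\<lambda>j. if even j then \<sigma> (j div 2) (2*i-1) else \<sigma> (j div 2) (2*i))))"
  proof (intro sum.cong refl)
    fix \<sigma> :: "nat \<Rightarrow> nat \<Rightarrow> nat"
    have "(\<Prod>s<m. F (\<sigma> s)) = Poly_Mapping.single (evec (\<lambda>i. \<Sum>s<m. e (\<sigma> s) i) {1..n}) (\<Prod>s<m. c (\<sigma> s))"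
      unfolding F_def single_prod vec_sum ..
    hence "Lf d n (\<Prod>s<m. F (\<sigma> s)) = (\<Prod>s<m. c (\<sigma> s)) * (\<Prod>i\<in>{1..n}. d (\<Sum>s<m. e (\<sigma> s) i))"
      by (simp only: Lf_vec)
    also have "(\<Prod>s<m. c (\<sigma> s)) = (\<Prod>s<m. of_int (sign (\<sigma> s))) * (\<Prod>i\<in>{1..n}. \<Prod>s<m. of_int (int (\<sigma> s (2*i)) - int (\<sigma> s (2*i-1))))"
      unfolding c_def prod.distrib by (subst prod.swap) simp
    also have "(\<Prod>i\<in>{1..n}. d (\<Sum>s<m. e (\<sigma> s) i)) = (\<Prod>i\<in>{1..n}. d (int ((2*n+1)*m) - (\<Sum>s<m. int (\<sigma> s (2*i-1)) + int (\<sigma> s (2*i)))))"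
      by (intro prod.cong refl arg_cong[where f=d]) (simp add: e_def sum_subtractf sum.distrib algebra_simps)
    also have "(\<Prod>s<m. of_int (sign (\<sigma> s))) * (\<Prod>i\<in>{1..n}. \<Prod>s<m. of_int (int (\<sigma> s (2*i)) - int (\<sigma> s (2*i-1)))) *
        (\<Prod>i\<in>{1..n}. d (int ((2*n+1)*m) - (\<Sum>s<m. int (\<sigma> s (2*i-1)) + int (\<sigma> s (2*i))))) =
      (\<Prod>s<m. of_int (sign (\<sigma> s))) * (\<Prod>i\<in>{1..n}. (\<Prod>s<m. of_int (int (\<sigma> s (2*i)) - int (\<sigma> s (2*i-1)))) *
        d (int ((2*n+1)*m) - (\<Sum>s<m. int (\<sigma> s (2*i-1)) + int (\<sigma> s (2*i)))))"
      by (simp only: prod.distrib mult.assoc)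
    also have "\<dots> = (\<Prod>s<m. of_int (sign (\<sigma> s))) *
      (\<Prod>i\<in>{1..n}. (\<lambda>idx. (\<Prod>s<m. of_int (int (idx (2 * s + 1)) - int (idx (2 * s)))) *
              d (int ((2*n+1)*m) - (\<Sum>j<2*m. int (idx j)))) (\<lambda>j. if even j then \<sigma> (j div 2) (2*i-1) else \<sigma> (j div 2) (2*i)))"
    proof (rule arg_cong2[where f="(*)"], rule refl, rule prod.cong, rule refl)
      fix i
      define jx where "jx = (\<lambda>j. if even j then \<sigma> (j div 2) (2*i-1) else \<sigma> (j div 2) (2*i))"
      have ix1: "jx (2*q) = \<sigma> q (2*i-1)" "jx (2*q+1) = \<sigma> q (2*i)" for q by (simp_all add: jx_def)
      have "(\<lambda>idx. (\<Prod>s<m. of_int (int (idx (2 * s + 1)) - int (idx (2 * s)))) *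
              d (int ((2*n+1)*m) - (\<Sum>j<2*m. int (idx j)))) jx =
         (\<Prod>s<m. of_int (int (\<sigma> s (2*i)) - int (\<sigma> s (2*i-1)))) *
        d (int ((2*n+1)*m) - (\<Sum>s<m. int (\<sigma> s (2*i-1)) + int (\<sigma> s (2*i))))"
        by (simp only: sum_pairs_lt ix1)
      thus "(\<Prod>s<m. of_int (int (\<sigma> s (2*i)) - int (\<sigma> s (2*i-1)))) *
        d (int ((2*n+1)*m) - (\<Sum>s<m. int (\<sigma> s (2*i-1)) + int (\<sigma> s (2*i)))) =
        (\<lambda>idx. (\<Prod>s<m. of_int (int (idx (2 * s + 1)) - int (idx (2 * s)))) *
              d (int ((2*n+1)*m) - (\<Sum>j<2*m. int (idx j)))) (\<lambda>j. if even j then \<sigma> (j div 2) (2*i-1) else \<sigma> (j div 2) (2*i))"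
        unfolding jx_def by (rule sym)
    qed
    finally show "Lf d n (\<Prod>s<m. F (\<sigma> s)) = (\<Prod>s<m. of_int (sign (\<sigma> s))) *
      (\<Prod>i\<in>{1..n}. (\<lambda>idx. (\<Prod>s<m. of_int (int (idx (2 * s + 1)) - int (idx (2 * s)))) *
              d (int ((2*n+1)*m) - (\<Sum>j<2*m. int (idx j)))) (\<lambda>j. if even j then \<sigma> (j div 2) (2*i-1) else \<sigma> (j div 2) (2*i)))" .
  qed
  finally show ?thesis unfolding hyperpf_def by (simp add: atLeast0LessThan)
qed

lemma pfaffian_L:
  "pfaffian n (\<lambda>i j. of_int (int j - int i) * d (int (2*n+1) - int i - int j)) = (1 / of_nat (fact n)) * Lf d n (Gp n)"
proof -
  define g where "g i a b = (of_int (int b - int a) * d (int (2*n+1) - int a - int b) :: complex)" for i a b :: nat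
  have fin: "finite (E_perms n)"
  proof -
    have "E_perms n \<subseteq> {\<pi>. \<pi> permutes {1..2*n}}" by (auto simp: E_perms_def)
    thus ?thesis by (rule finite_subset) (rule finite_permutations, simp)
  qed
  have "(\<Sum>\<pi> | \<pi> permutes {1..2*n}. of_int (sign \<pi>) * (\<Prod>i\<in>{1..n}. g i (\<pi> (2*i-1)) (\<pi> (2*i)))) =
      (\<Sum>\<sigma>\<in>E_perms n. of_int (sign \<sigma>) * (\<Prod>i\<in>{1..n}. g i (\<sigma> (2*i-1)) (\<sigma> (2*i)) - g i (\<sigma> (2*i)) (\<sigma> (2*i-1))))"
    by (rule fold_perm)
  also have "\<dots> = (\<Sum>\<sigma>\<in>E_perms n. 2 ^ n * (of_int (sign \<sigma>) * (\<Prod>i\<in>{1..n}. g i (\<sigma> (2*i-1)) (\<sigma> (2*i)))))"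
  proof (intro sum.cong refl)
    fix \<sigma>
    have "(\<Prod>i\<in>{1..n}. g i (\<sigma> (2*i-1)) (\<sigma> (2*i)) - g i (\<sigma> (2*i)) (\<sigma> (2*i-1))) = (\<Prod>i\<in>{1..n}. 2 * g i (\<sigma> (2*i-1)) (\<sigma> (2*i)))"
      by (intro prod.cong refl) (simp add: g_def algebra_simps)
    thus "of_int (sign \<sigma>) * (\<Prod>i\<in>{1..n}. g i (\<sigma> (2*i-1)) (\<sigma> (2*i)) - g i (\<sigma> (2*i)) (\<sigma> (2*i-1))) =
      2 ^ n * (of_int (sign \<sigma>) * (\<Prod>i\<in>{1..n}. g i (\<sigma> (2*i-1)) (\<sigma> (2*i))))"
      by (simp add: prod.distrib)
  qed
  also have "\<dots> = 2 ^ n * Lf d n (Gp n)"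
    unfolding Gp_def Lf_sum sum_distrib_left
  proof (rule sum.cong[OF refl])
    fix \<sigma>
    show "2 ^ n * (of_int (sign \<sigma>) * (\<Prod>i\<in>{1..n}. g i (\<sigma> (2*i-1)) (\<sigma> (2*i)))) =
      2 ^ n * Lf d n (Poly_Mapping.single (evec (\<lambda>i. int (2*n+1) - int (\<sigma> (2*i-1)) - int (\<sigma> (2*i))) {1..n})
      (of_int (sign \<sigma>) * (\<Prod>i\<in>{1..n}. of_int (int (\<sigma> (2*i)) - int (\<sigma> (2*i-1))))))"
      unfolding Lf_vec g_def prod.distrib by (simp only: mult.assoc)
  qed
  finally have *: "(\<Sum>\<pi> | \<pi> permutes {1..2*n}. of_int (sign \<pi>) * (\<Prod>i\<in>{1..n}. g i (\<pi> (2*i-1)) (\<pi> (2*i)))) = 2 ^ n * Lf d n (Gp n)" .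
  show ?thesis unfolding pfaffian_def using * by (simp add: g_def)
qed

theorem theorem4p2:
  fixes f :: "complex \<Rightarrow> complex" and m n :: nat
  assumes "L1_circle f" and "m \<ge> 1" and "n \<ge> 1"
  defines "d \<equiv> fourier_coeff f"
  shows "(toeplitz_hyperdet (2*m) n d =
           hyperpf m n (\<lambda>idx. (\<Prod>s<m. of_int (int (idx (2 * s + 1)) - int (idx (2 * s)))) *
              d (int ((2*n+1)*m) - (\<Sum>j<2*m. int (idx j))))) \<and>
         (toeplitz_hyperdet 2 n d =
           pfaffian n (\<lambda>i j. of_int (int j - int i) * d (int (2*n+1) - int i - int j)))"
proof -
  have n: "n \<ge> 1" using assms(3) .
  have WGm: "Wp n 1 ^ (2*m) * Wp n (-1) ^ (2*m) = Gp n ^ m"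
  proof -
    have "Wp n 1 ^ (2*m) * Wp n (-1) ^ (2*m) = (Wp n 1 ^ 2 * Wp n (-1) ^ 2) ^ m"
      by (simp add: power_mult power_mult_distrib)
    thus ?thesis using WG[OF n] by simp
  qed
  have p1: "toeplitz_hyperdet (2*m) n d =
           hyperpf m n (\<lambda>idx. (\<Prod>s<m. of_int (int (idx (2 * s + 1)) - int (idx (2 * s)))) *
              d (int ((2*n+1)*m) - (\<Sum>j<2*m. int (idx j))))"
    unfolding toeplitz_L hyperpf_L WGm ..
  have p2: "toeplitz_hyperdet 2 n d =
           pfaffian n (\<lambda>i j. of_int (int j - int i) * d (int (2*n+1) - int i - int j))"
    unfolding toeplitz_L pfaffian_L WG[OF n] ..
  show ?thesis using p1 p2 by blast
qed

end
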